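(* Let $A\in\mathbb{R}^{n\times n}$ be symmetric, let $W_k\in\mathbb{R}^{n\times m}$ satisfy $W_k^TW_k=I_m$, and let $v_{k-1},v_k\in\mathbb{R}^{n\times p}$ and $\alpha_k,\beta_k\in\mathbb{R}^{p\times p}$ be given. Define block vectors $q_{k+j}$, $j\ge1$, by the continuation process \[ \begin{aligned} \tilde q_{k+1}&=Av_k-v_k\alpha_k-v_{k-1}\beta_k^T, & q_{k+1}\beta_{k+1}&=(I_n-P_1)\tilde q_{k+1},\\ \tilde q_{k+2}&=Aq_{k+1}-v_k\beta_{k+1}^T, & q_{k+2}\beta_{k+2}&=(I_n-P_2)\tilde q_{k+2},\\ \tilde q_{k+j}&=Aq_{k+j-1}-q_{k+j-2}\beta_{k+j-1}^T, & q_{k+j}\beta_{k+j}&=(I_n-P_j)\tilde q_{k+j},\quad j\ge3, \end{aligned} \] where $P_1=W_kW_k^T$, $P_2=P_1+q_{k+1}q_{k+1}^T$, $P_j=P_2+q_{k+j-1}q_{k+j-1}^T$ for $j\ge3$, and where, for each $j$, the columns of $q_{k+j}$ form an orthonormal basis of the column space of $(I_n-P_j)\tilde q_{k+j}$ and $\beta_{k+j}$ is the (possibly rectangular) matrix of full row rank with $q_{k+j}\beta_{k+j}=(I_n-P_j)\tilde q_{k+j}$. Then for every $j\ge1$ the set of columns of $W_k,q_{k+1},\ldots,q_{k+j}$ is orthonormal. Moreover, for $j\ge3$, \[ \beta_{k+j}=q_{k+j}^TAq_{k+j-1}. \]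
   Context: In cases of rank deficiency the number of columns of $q_{k+j}$ is reduced accordingly (it equals the rank of $(I_n-P_j)\tilde q_{k+j}$). *)

theory Defs
  imports "Jordan_Normal_Form.DL_Rank"
begin

definition col_space :: "real mat \<Rightarrow> real vec set" where
  "col_space M = {M *\<^sub>v x | x. x \<in> carrier_vec (dim_col M)}"

definition orthonormal_list :: "real vec list \<Rightarrow> bool" where
  "orthonormal_list xs \<longleftrightarrow>
     (\<forall>a < length xs. \<forall>b < length xs. xs ! a \<bullet> xs ! b = (if a = b then 1 else 0))"

definition full_row_rank :: "real mat \<Rightarrow> bool" where
  "full_row_rank B \<longleftrightarrow> vec_space.rank (dim_row B) B = dim_row B"

end

theory Submission
  imports Defs
begin


lemma real_self_sprod_0:
  fixes y :: "real vec"
  assumes "y \<in> carrier_vec r" "y \<bullet> y = 0"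
  shows "y = 0\<^sub>v r"
proof -
  have "conjugate y = y" by (rule eq_vecI) auto
  then have "y \<bullet>c y = 0" using assms by simp
  then show ?thesis using conjugate_square_eq_0_vec[OF assms(1)] by simp
qed

lemma fullrow_vec:
  fixes B :: "real mat"
  assumes B: "B \<in> carrier_mat r c" and fr: "full_row_rank B"
    and y: "y \<in> carrier_vec r" and o: "\<And>i. i < c \<Longrightarrow> y \<bullet> col B i = 0"
  shows "y = 0\<^sub>v r"
proof -
  interpret V: vec_space "TYPE(real)" r .
  have rk: "V.rank B = r" using fr B unfolding full_row_rank_def by simp
  obtain U where U: "maximal U (\<lambda>T. T \<subseteq> set (cols B) \<and> V.lin_indpt T)" "finite U"
  proof -
    have P0: "{} \<subseteq> set (cols B) \<and> V.lin_indpt {}" by (simp add: V.lin_dep_def)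
    have "\<exists>U. finite U \<and> maximal U (\<lambda>T. T \<subseteq> set (cols B) \<and> V.lin_indpt T) \<and> {} \<subseteq> U"
      by (rule maximal_exists_superset[where S="set (cols B)" and P="\<lambda>T. T \<subseteq> set (cols B) \<and> V.lin_indpt T" and B="{}"]) (use P0 in auto)
    then show ?thesis using that by blast
  qed
  have cardU: "card U = r" using V.rank_card_indpt[OF B U(1)] rk by simp
  have Usub: "U \<subseteq> set (cols B)" "V.lin_indpt U" using U(1) unfolding maximal_def by auto
  have colsB: "set (cols B) \<subseteq> carrier_vec r" using B cols_dim by blast
  have "V.basis U"
    apply (rule V.dim_li_is_basis[OF V.fin_dim U(2) _ Usub(2)])
    using Usub(1) colsB cardU V.dim_is_n by simp_all
  then have spanU: "V.span U = carrier_vec r" unfolding V.basis_def by simp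
  have "y \<in> V.orthogonal_complement (set (cols B))"
    using y o B unfolding V.orthogonal_complement_def by (auto simp: cols_def)
  then have "y \<in> V.orthogonal_complement U"
    using V.orthogonal_complement_subset[OF Usub(1)] by blast
  then have "y \<in> V.orthogonal_complement (V.span U)"
    using V.in_orthogonal_complement_span Usub(1) colsB by (metis subset_trans)
  then have "y \<bullet> y = 0" using y unfolding spanU V.orthogonal_complement_def by auto
  then show ?thesis using real_self_sprod_0 y by blast
qed

lemma fullrow_mat:
  fixes B Y :: "real mat"
  assumes B: "B \<in> carrier_mat r c" and fr: "full_row_rank B"
    and Y: "Y \<in> carrier_mat k r" and YB: "Y * B = 0\<^sub>m k c"
  shows "Y = 0\<^sub>m k r"
proof (rule eq_matI)
  fix i j assume i: "i < dim_row (0\<^sub>m k r :: real mat)" and j: "j < dim_col (0\<^sub>m k r :: real mat)"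
  have "row Y i = 0\<^sub>v r"
  proof (rule fullrow_vec[OF B fr])
    show "row Y i \<in> carrier_vec r" using Y by auto
    fix l assume l: "l < c"
    have "(Y * B) $$ (i, l) = row Y i \<bullet> col B l" using i l Y B by auto
    then show "row Y i \<bullet> col B l = 0" using YB i l by simp
  qed
  then have "row Y i $ j = 0" using j by simp
  then show "Y $$ (i, j) = 0\<^sub>m k r $$ (i, j)" using i j Y by auto
qed (use Y in auto)

lemma cancel_beta:
  fixes X Q B :: "real mat"
  assumes X: "X \<in> carrier_mat n k" and Q: "Q \<in> carrier_mat n r" and B: "B \<in> carrier_mat r c"
    and fr: "full_row_rank B" and z: "X\<^sup>T * (Q * B) = 0\<^sub>m k c"
  shows "X\<^sup>T * Q = 0\<^sub>m k r"
proof (rule fullrow_mat[OF B fr])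
  show "X\<^sup>T * Q \<in> carrier_mat k r" using X Q by auto
  have "X\<^sup>T * Q * B = X\<^sup>T * (Q * B)" using X Q B by (intro assoc_mult_mat) auto
  then show "X\<^sup>T * Q * B = 0\<^sub>m k c" using z by simp
qed

lemma minus_zero_mat:
  fixes A :: "real mat"
  shows "A \<in> carrier_mat a b \<Longrightarrow> A - 0\<^sub>m a b = A"
  by (rule eq_matI) auto

lemma minus_proj:
  fixes X P T :: "real mat"
  assumes X: "X \<in> carrier_mat n k" and P: "P \<in> carrier_mat n n" and T: "T \<in> carrier_mat n c"
  shows "X\<^sup>T * ((1\<^sub>m n - P) * T) = X\<^sup>T * T - (X\<^sup>T * P) * T"
proof -
  have Xt: "X\<^sup>T \<in> carrier_mat k n" using X by auto
  have "X\<^sup>T * ((1\<^sub>m n - P) * T) = (X\<^sup>T * (1\<^sub>m n - P)) * T"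
    using Xt P T by (intro assoc_mult_mat[symmetric]) auto
  also have "X\<^sup>T * (1\<^sub>m n - P) = X\<^sup>T * 1\<^sub>m n - X\<^sup>T * P"
    using Xt P by (intro mult_minus_distrib_mat) auto
  also have "X\<^sup>T * 1\<^sub>m n = X\<^sup>T" using Xt by simp
  also have "(X\<^sup>T - X\<^sup>T * P) * T = X\<^sup>T * T - (X\<^sup>T * P) * T"
    using Xt P T by (intro minus_mult_distrib_mat) auto
  finally show ?thesis .
qed

lemma proj_zero:
  fixes X P T :: "real mat"
  assumes X: "X \<in> carrier_mat n k" and P: "P \<in> carrier_mat n n" and T: "T \<in> carrier_mat n c"
    and XP: "X\<^sup>T * P = X\<^sup>T"
  shows "X\<^sup>T * ((1\<^sub>m n - P) * T) = 0\<^sub>m k c"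
  unfolding minus_proj[OF X P T] XP using X T by (intro minus_r_inv_mat) auto

lemma proj_id:
  fixes X P T :: "real mat"
  assumes X: "X \<in> carrier_mat n k" and P: "P \<in> carrier_mat n n" and T: "T \<in> carrier_mat n c"
    and XP: "X\<^sup>T * P = 0\<^sub>m k n"
  shows "X\<^sup>T * ((1\<^sub>m n - P) * T) = X\<^sup>T * T"
  unfolding minus_proj[OF X P T] XP using X T by (simp add: minus_zero_mat)

lemma proj_term:
  fixes X U :: "real mat"
  assumes X: "X \<in> carrier_mat n k" and U: "U \<in> carrier_mat n s"
  shows "X\<^sup>T * (U * U\<^sup>T) = (X\<^sup>T * U) * U\<^sup>T"
  using X U by (intro assoc_mult_mat[symmetric]) auto

lemma mult_minus_right:
  fixes X Y Z :: "real mat"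
  assumes "X \<in> carrier_mat n k" "Y \<in> carrier_mat n c" "Z \<in> carrier_mat n c"
  shows "X\<^sup>T * (Y - Z) = X\<^sup>T * Y - X\<^sup>T * Z"
  using assms by (intro mult_minus_distrib_mat) auto

lemma symA:
  fixes A X Y :: "real mat"
  assumes A: "A \<in> carrier_mat n n" "A\<^sup>T = A" and X: "X \<in> carrier_mat n k" and Y: "Y \<in> carrier_mat n l"
  shows "X\<^sup>T * (A * Y) = (Y\<^sup>T * (A * X))\<^sup>T"
proof -
  have "(Y\<^sup>T * (A * X))\<^sup>T = (A * X)\<^sup>T * Y\<^sup>T\<^sup>T"
    using A X Y by (intro transpose_mult) auto
  also have "(A * X)\<^sup>T = X\<^sup>T * A\<^sup>T" using A X by (intro transpose_mult) auto
  finally show ?thesis using A X Y by simp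
qed

lemma cols_prod_zero:
  fixes X Y :: "real mat"
  assumes X: "X \<in> carrier_mat n k" and Y: "Y \<in> carrier_mat n l" and z: "X\<^sup>T * Y = 0\<^sub>m k l"
    and x: "x \<in> set (cols X)" and y: "y \<in> set (cols Y)"
  shows "x \<bullet> y = 0 \<and> y \<bullet> x = 0"
proof -
  obtain a where a: "a < k" "x = col X a" using x X by (auto simp: in_set_conv_nth)
  obtain b where b: "b < l" "y = col Y b" using y Y by (auto simp: in_set_conv_nth)
  have "(X\<^sup>T * Y) $$ (a, b) = col X a \<bullet> col Y b" using a b X Y by auto
  then have "x \<bullet> y = 0" using z a b by simp
  moreover have "y \<bullet> x = x \<bullet> y" using a b X Y by (intro comm_scalar_prod[of _ n]) auto
  ultimately show ?thesis by simp
qed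

lemma orth_cols:
  fixes X :: "real mat"
  assumes X: "X \<in> carrier_mat n k" and o: "X\<^sup>T * X = 1\<^sub>m k"
  shows "orthonormal_list (cols X)"
  unfolding orthonormal_list_def
proof (intro allI impI)
  fix a b assume a: "a < length (cols X)" and b: "b < length (cols X)"
  then have ab: "a < k" "b < k" using X by auto
  have "(X\<^sup>T * X) $$ (a, b) = col X a \<bullet> col X b" using ab X by auto
  then show "cols X ! a \<bullet> cols X ! b = (if a = b then 1 else 0)" using o ab X by auto
qed

lemma orth_append:
  assumes "orthonormal_list xs" "orthonormal_list ys"
    and "\<And>x y. x \<in> set xs \<Longrightarrow> y \<in> set ys \<Longrightarrow> x \<bullet> y = 0 \<and> y \<bullet> x = 0"
  shows "orthonormal_list (xs @ ys)"
  unfolding orthonormal_list_def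
proof (intro allI impI)
  fix a b assume a: "a < length (xs @ ys)" and b: "b < length (xs @ ys)"
  show "(xs @ ys) ! a \<bullet> (xs @ ys) ! b = (if a = b then 1 else 0)"
  proof (cases "a < length xs"; cases "b < length xs")
    assume "a < length xs" "b < length xs" then show ?thesis
      using assms(1) unfolding orthonormal_list_def by (simp add: nth_append)
  next
    assume "a < length xs" "\<not> b < length xs" then show ?thesis
      using assms(3)[of "xs ! a" "ys ! (b - length xs)"] b by (auto simp: nth_append)
  next
    assume "\<not> a < length xs" "b < length xs" then show ?thesis
      using assms(3)[of "xs ! b" "ys ! (a - length xs)"] a by (auto simp: nth_append)
  next
    assume "\<not> a < length xs" "\<not> b < length xs" then show ?thesis
      using assms(2) a b unfolding orthonormal_list_def
      by (auto simp: nth_append)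
  qed
qed



locale lanczos =
  fixes n m p :: nat
    and A W vkm1 vk alphak betak :: "real mat"
    and q qt beta P :: "nat \<Rightarrow> real mat"
    and r :: "nat \<Rightarrow> nat"
  assumes A: "A \<in> carrier_mat n n" "A\<^sup>T = A"
    and W: "W \<in> carrier_mat n m" "W\<^sup>T * W = 1\<^sub>m m"
    and v: "vkm1 \<in> carrier_mat n p" "vk \<in> carrier_mat n p"
    and ab: "alphak \<in> carrier_mat p p" "betak \<in> carrier_mat p p"
    and qt1: "qt 1 = A * vk - vk * alphak - vkm1 * betak\<^sup>T"
    and qt2: "qt 2 = A * q 1 - vk * (beta 1)\<^sup>T"
    and qtj: "\<And>j. j \<ge> 3 \<Longrightarrow> qt j = A * q (j - 1) - q (j - 2) * (beta (j - 1))\<^sup>T"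
    and P1: "P 1 = W * W\<^sup>T"
    and P2: "P 2 = P 1 + q 1 * (q 1)\<^sup>T"
    and Pj: "\<And>j. j \<ge> 3 \<Longrightarrow> P j = P 2 + q (j - 1) * (q (j - 1))\<^sup>T"
    and qdim: "\<And>j. j \<ge> 1 \<Longrightarrow> q j \<in> carrier_mat n (r j)"
    and beta1dim: "beta 1 \<in> carrier_mat (r 1) p"
    and betajdim: "\<And>j. j \<ge> 2 \<Longrightarrow> beta j \<in> carrier_mat (r j) (r (j - 1))"
    and qorth: "\<And>j. j \<ge> 1 \<Longrightarrow> (q j)\<^sup>T * q j = 1\<^sub>m (r j)"
    and qbeta: "\<And>j. j \<ge> 1 \<Longrightarrow> q j * beta j = (1\<^sub>m n - P j) * qt j"
    and betarank: "\<And>j. j \<ge> 1 \<Longrightarrow> full_row_rank (beta j)"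
begin

definition cq :: "nat \<Rightarrow> nat" where "cq j = (if j = 1 then p else r (j - 1))"

lemma betac: "j \<ge> 1 \<Longrightarrow> beta j \<in> carrier_mat (r j) (cq j)"
  using beta1dim betajdim unfolding cq_def by (cases "j = 1") auto

lemma qtc: "j \<ge> 1 \<Longrightarrow> qt j \<in> carrier_mat n (cq j)"
proof -
  assume j: "j \<ge> 1"
  consider "j = 1" | "j = 2" | "j \<ge> 3" using j by linarith
  then show ?thesis
  proof cases
    case 1
    have "qt 1 \<in> carrier_mat n p" unfolding qt1 using A v ab by auto
    then show ?thesis using 1 unfolding cq_def by simp
  next
    case 2
    have "qt 2 \<in> carrier_mat n (r 1)" unfolding qt2 using A v beta1dim qdim[of 1] by auto
    then show ?thesis using 2 unfolding cq_def by simp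
  next
    case 3
    have e: "j - 1 - 1 = j - 2" by simp
    have b: "beta (j - 1) \<in> carrier_mat (r (j - 1)) (r (j - 1 - 1))"
      using betajdim[of "j - 1"] 3 by simp
    have "q (j - 1) \<in> carrier_mat n (r (j - 1))" "q (j - 2) \<in> carrier_mat n (r (j - 2))"
      "beta (j - 1) \<in> carrier_mat (r (j - 1)) (r (j - 2))"
      using qdim[of "j - 1"] qdim[of "j - 2"] b 3 unfolding e by auto
    then show ?thesis unfolding cq_def qtj[OF 3] using A 3 by auto
  qed
qed

lemma P1c: "P 1 \<in> carrier_mat n n" unfolding P1 using W by auto
lemma P2c: "P 2 \<in> carrier_mat n n" unfolding P2 using P1c qdim[of 1] by auto
lemma Pc: "j \<ge> 1 \<Longrightarrow> P j \<in> carrier_mat n n"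
proof -
  assume j: "j \<ge> 1"
  consider "j = 1" | "j = 2" | "j \<ge> 3" using j by linarith
  then show ?thesis
  proof cases
    case 3
    have "q (j - 1) \<in> carrier_mat n (r (j - 1))" using qdim 3 by auto
    then show ?thesis unfolding Pj[OF 3] using P2c by auto
  qed (use P1c P2c in auto)
qed

lemma XP1: "X \<in> carrier_mat n k \<Longrightarrow> X\<^sup>T * P 1 = (X\<^sup>T * W) * W\<^sup>T"
  unfolding P1 using W by (intro proj_term) auto

lemma XP2: assumes X: "X \<in> carrier_mat n k"
  shows "X\<^sup>T * P 2 = (X\<^sup>T * W) * W\<^sup>T + (X\<^sup>T * q 1) * (q 1)\<^sup>T"
proof -
  have "X\<^sup>T * P 2 = X\<^sup>T * P 1 + X\<^sup>T * (q 1 * (q 1)\<^sup>T)"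
    unfolding P2 using X P1c qdim[of 1] by (intro mult_add_distrib_mat) auto
  then show ?thesis using XP1[OF X] proj_term[OF X qdim[of 1]] by simp
qed

lemma XPj: assumes X: "X \<in> carrier_mat n k" and j: "j \<ge> 3"
  shows "X\<^sup>T * P j = (X\<^sup>T * W) * W\<^sup>T + (X\<^sup>T * q 1) * (q 1)\<^sup>T + (X\<^sup>T * q (j - 1)) * (q (j - 1))\<^sup>T"
proof -
  have qj: "q (j - 1) \<in> carrier_mat n (r (j - 1))" using qdim j by auto
  have "X\<^sup>T * P j = X\<^sup>T * P 2 + X\<^sup>T * (q (j - 1) * (q (j - 1))\<^sup>T)"
    unfolding Pj[OF j] using X P2c qj by (intro mult_add_distrib_mat) auto
  then show ?thesis using XP2[OF X] proj_term[OF X qj] by simp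
qed

definition Inv :: "nat \<Rightarrow> bool" where
  "Inv J \<longleftrightarrow> (\<forall>b. 1 \<le> b \<longrightarrow> b \<le> J \<longrightarrow> W\<^sup>T * q b = 0\<^sub>m m (r b)) \<and>
     (\<forall>a b. 1 \<le> a \<longrightarrow> a < b \<longrightarrow> b \<le> J \<longrightarrow> (q a)\<^sup>T * q b = 0\<^sub>m (r a) (r b))"

lemma InvW: "Inv J \<Longrightarrow> 1 \<le> b \<Longrightarrow> b \<le> J \<Longrightarrow> W\<^sup>T * q b = 0\<^sub>m m (r b)"
  unfolding Inv_def by blast

lemma InvW': "Inv J \<Longrightarrow> 1 \<le> b \<Longrightarrow> b \<le> J \<Longrightarrow> (q b)\<^sup>T * W = 0\<^sub>m (r b) m"
proof -
  assume *: "Inv J" "1 \<le> b" "b \<le> J"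
  have "(q b)\<^sup>T * W = (W\<^sup>T * q b)\<^sup>T" using W qdim[of b] * by (simp add: transpose_mult[of _ m n])
  then show ?thesis using InvW[OF *] by simp
qed

lemma Invq: "Inv J \<Longrightarrow> 1 \<le> a \<Longrightarrow> a < b \<Longrightarrow> b \<le> J \<Longrightarrow> (q a)\<^sup>T * q b = 0\<^sub>m (r a) (r b)"
  unfolding Inv_def by blast

lemma Invq': "Inv J \<Longrightarrow> 1 \<le> a \<Longrightarrow> a < b \<Longrightarrow> b \<le> J \<Longrightarrow> (q b)\<^sup>T * q a = 0\<^sub>m (r b) (r a)"
proof -
  assume *: "Inv J" "1 \<le> a" "a < b" "b \<le> J"
  have "(q b)\<^sup>T * q a = ((q a)\<^sup>T * q b)\<^sup>T" using qdim[of a] qdim[of b] * by (simp add: transpose_mult[of _ "r a" n])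
  then show ?thesis using Invq[OF *] by simp
qed

end


context lanczos begin

lemma betaform:
  assumes j: "3 \<le> j" and I: "Inv j"
  shows "beta j = (q j)\<^sup>T * A * q (j - 1)"
proof -
  define Q where "Q = q j"
  have Qc: "Q \<in> carrier_mat n (r j)" using qdim j Q_def by auto
  have q1c: "q 1 \<in> carrier_mat n (r 1)" using qdim by auto
  have qj1c: "q (j - 1) \<in> carrier_mat n (r (j - 1))" using qdim j by auto
  have qj2c: "q (j - 2) \<in> carrier_mat n (r (j - 2))" using qdim j by auto
  have cqe: "cq (j - 1) = r (j - 2)" using j unfolding cq_def by (auto simp: numeral_2_eq_2)
  have bj1: "beta (j - 1) \<in> carrier_mat (r (j - 1)) (r (j - 2))" using betac[of "j - 1"] j cqe by auto
  have QW: "Q\<^sup>T * W = 0\<^sub>m (r j) m" using InvW'[OF I, of j] j Q_def by auto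
  have Q1: "Q\<^sup>T * q 1 = 0\<^sub>m (r j) (r 1)" using Invq'[OF I, of 1 j] j Q_def by auto
  have Qj1: "Q\<^sup>T * q (j - 1) = 0\<^sub>m (r j) (r (j - 1))" using Invq'[OF I, of "j - 1" j] j Q_def by auto
  have Qj2: "Q\<^sup>T * q (j - 2) = 0\<^sub>m (r j) (r (j - 2))" using Invq'[OF I, of "j - 2" j] j Q_def by auto
  have QP: "Q\<^sup>T * P j = 0\<^sub>m (r j) n"
    unfolding XPj[OF Qc j] QW Q1 Qj1 using W q1c qj1c by simp
  have "beta j = (Q\<^sup>T * Q) * beta j" using qorth[of j] j Q_def betac[of j] by simp
  also have "\<dots> = Q\<^sup>T * (Q * beta j)" using Qc betac[of j] j by (intro assoc_mult_mat) auto
  also have "\<dots> = Q\<^sup>T * ((1\<^sub>m n - P j) * qt j)" using qbeta[of j] j Q_def by simp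
  also have "\<dots> = Q\<^sup>T * qt j" using proj_id[OF Qc Pc[of j] qtc[of j] QP] j by simp
  also have "\<dots> = Q\<^sup>T * (A * q (j - 1)) - Q\<^sup>T * (q (j - 2) * (beta (j - 1))\<^sup>T)"
    unfolding qtj[OF j] using Qc A qj1c qj2c bj1 by (intro mult_minus_right) auto
  also have "Q\<^sup>T * (q (j - 2) * (beta (j - 1))\<^sup>T) = (Q\<^sup>T * q (j - 2)) * (beta (j - 1))\<^sup>T"
    using Qc qj2c bj1 by (intro assoc_mult_mat[symmetric]) auto
  also have "\<dots> = 0\<^sub>m (r j) (r (j - 1))" unfolding Qj2 using bj1 by simp
  also have "Q\<^sup>T * (A * q (j - 1)) - 0\<^sub>m (r j) (r (j - 1)) = Q\<^sup>T * (A * q (j - 1))"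
    using Qc A qj1c by (intro minus_zero_mat) auto
  also have "\<dots> = Q\<^sup>T * A * q (j - 1)" using Qc A qj1c by (intro assoc_mult_mat[symmetric]) auto
  finally show ?thesis unfolding Q_def .
qed

lemma Aq_ortho:
  assumes I: "Inv K" and a: "2 \<le> a" and aK: "a + 1 < K"
  shows "(q K)\<^sup>T * (A * q a) = 0\<^sub>m (r K) (r a)"
proof -
  define Q where "Q = q K"
  define b where "b = a + 1"
  have b3: "3 \<le> b" using a b_def by auto
  have b1: "b - 1 = a" "b - 2 = a - 1" using b_def by auto
  have Qc: "Q \<in> carrier_mat n (r K)" using qdim aK Q_def by auto
  have q1c: "q 1 \<in> carrier_mat n (r 1)" using qdim by auto
  have qac: "q a \<in> carrier_mat n (r a)" using qdim a by auto
  have qa1c: "q (a - 1) \<in> carrier_mat n (r (a - 1))" using qdim a by auto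
  have qbc: "q b \<in> carrier_mat n (r b)" using qdim b3 by auto
  have cqe: "cq a = r (a - 1)" using a unfolding cq_def by auto
  have ba: "beta a \<in> carrier_mat (r a) (r (a - 1))" using betac[of a] a cqe by auto
  have QW: "Q\<^sup>T * W = 0\<^sub>m (r K) m" using InvW'[OF I, of K] aK Q_def by auto
  have Q1: "Q\<^sup>T * q 1 = 0\<^sub>m (r K) (r 1)" using Invq'[OF I, of 1 K] aK Q_def by auto
  have Qa: "Q\<^sup>T * q a = 0\<^sub>m (r K) (r a)" using Invq'[OF I, of a K] aK a Q_def by auto
  have Qa1: "Q\<^sup>T * q (a - 1) = 0\<^sub>m (r K) (r (a - 1))" using Invq'[OF I, of "a - 1" K] aK a Q_def by auto
  have Qb: "Q\<^sup>T * q b = 0\<^sub>m (r K) (r b)" using Invq'[OF I, of b K] aK a Q_def b_def by auto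
  have QP: "Q\<^sup>T * P b = 0\<^sub>m (r K) n"
    unfolding XPj[OF Qc b3] b1 QW Q1 Qa using W q1c qac by simp
  have "Q\<^sup>T * qt b = Q\<^sup>T * ((1\<^sub>m n - P b) * qt b)"
    using proj_id[OF Qc Pc[of b] qtc[of b] QP] b3 by simp
  also have "\<dots> = Q\<^sup>T * (q b * beta b)" using qbeta[of b] b3 by simp
  also have "\<dots> = (Q\<^sup>T * q b) * beta b" using Qc qbc betac[of b] b3 by (intro assoc_mult_mat[symmetric]) auto
  also have "\<dots> = 0\<^sub>m (r K) (cq b)" unfolding Qb using betac[of b] b3 by simp
  finally have z: "Q\<^sup>T * qt b = 0\<^sub>m (r K) (cq b)" .
  have "Q\<^sup>T * qt b = Q\<^sup>T * (A * q a) - Q\<^sup>T * (q (a - 1) * (beta a)\<^sup>T)"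
    unfolding qtj[OF b3] b1 using Qc A qac qa1c ba by (intro mult_minus_right) auto
  also have "Q\<^sup>T * (q (a - 1) * (beta a)\<^sup>T) = (Q\<^sup>T * q (a - 1)) * (beta a)\<^sup>T"
    using Qc qa1c ba by (intro assoc_mult_mat[symmetric]) auto
  also have "\<dots> = 0\<^sub>m (r K) (r a)" unfolding Qa1 using ba by simp
  also have "Q\<^sup>T * (A * q a) - 0\<^sub>m (r K) (r a) = Q\<^sup>T * (A * q a)"
    using Qc A qac by (intro minus_zero_mat) auto
  finally have "Q\<^sup>T * (A * q a) = Q\<^sup>T * qt b" by simp
  then have "Q\<^sup>T * (A * q a) = 0\<^sub>m (r K) (cq b)" using z by simp
  then show ?thesis unfolding Q_def cq_def b_def using a by simp
qed

end


context lanczos begin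

lemma Inv_step:
  assumes I: "Inv J"
  shows "Inv (Suc J)"
proof -
  define j where "j = Suc J"
  have j1: "1 \<le> j" using j_def by simp
  have key: "X\<^sup>T * q j = 0\<^sub>m k (r j)"
    if X: "X \<in> carrier_mat n k" and z: "X\<^sup>T * ((1\<^sub>m n - P j) * qt j) = 0\<^sub>m k (cq j)" for X k
  proof (rule cancel_beta[OF X qdim[OF j1] betac[OF j1] betarank[OF j1]])
    show "X\<^sup>T * (q j * beta j) = 0\<^sub>m k (cq j)" using z qbeta[OF j1] by simp
  qed
  have q1c: "q 1 \<in> carrier_mat n (r 1)" using qdim by auto
  have Wt: "W\<^sup>T \<in> carrier_mat m n" using W by auto
  have WP: "W\<^sup>T * P j = W\<^sup>T"
  proof -
    consider "J = 0" | "J = 1" | "J \<ge> 2" by linarith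
    then show ?thesis
    proof cases
      case 1
      then show ?thesis unfolding j_def using XP1[OF W(1)] W by simp
    next
      case 2
      have "W\<^sup>T * q 1 = 0\<^sub>m m (r 1)" using InvW[OF I, of 1] 2 by simp
      have j2: "j = 2" using j_def 2 by simp
      show ?thesis unfolding j2 using XP2[OF W(1)] W q1c \<open>W\<^sup>T * q 1 = 0\<^sub>m m (r 1)\<close> by simp
    next
      case 3
      have j3: "3 \<le> j" using 3 j_def by simp
      have a: "W\<^sup>T * q 1 = 0\<^sub>m m (r 1)" using InvW[OF I, of 1] 3 by simp
      have b: "W\<^sup>T * q J = 0\<^sub>m m (r J)" using InvW[OF I, of J] 3 by simp
      have qJ: "q J \<in> carrier_mat n (r J)" using qdim 3 by simp
      show ?thesis using XPj[OF W(1) j3] a b W q1c qJ unfolding j_def by simp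
    qed
  qed
  have Wq: "W\<^sup>T * q j = 0\<^sub>m m (r j)"
    by (rule key[OF W(1) proj_zero[OF W(1) Pc[OF j1] qtc[OF j1] WP]])
  have qq: "(q a)\<^sup>T * q j = 0\<^sub>m (r a) (r j)" if a1: "1 \<le> a" and aJ: "a \<le> J" for a
  proof -
    have Xc: "q a \<in> carrier_mat n (r a)" using qdim a1 by simp
    have XW: "(q a)\<^sup>T * W = 0\<^sub>m (r a) m" using InvW'[OF I a1 aJ] .
    show ?thesis
    proof (cases "a = 1 \<or> a = J")
      case True
      have XP: "(q a)\<^sup>T * P j = (q a)\<^sup>T"
      proof (cases "J = 1")
        case True
        then have a: "a = 1" using a1 aJ by simp
        have j2: "j = 2" using j_def True by simp
        show ?thesis unfolding j2 XP2[OF Xc] using a XP2[OF q1c] qorth[of 1] XW a W q1c by simp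
      next
        case False
        then have J2: "J \<ge> 2" using a1 aJ by simp
        have j3: "3 \<le> j" using J2 j_def by simp
        have qJ: "q J \<in> carrier_mat n (r J)" using qdim J2 by simp
        have e: "j - 1 = J" using j_def by simp
        show ?thesis
        proof (cases "a = 1")
          case True
          have "(q 1)\<^sup>T * q J = 0\<^sub>m (r 1) (r J)" using Invq[OF I, of 1 J] J2 by simp
          then show ?thesis unfolding XPj[OF Xc j3] e using qorth[of 1] XW True W q1c qJ by simp
        next
          case False
          then have aJ': "a = J" using \<open>a = 1 \<or> a = J\<close> by simp
          have "(q J)\<^sup>T * q 1 = 0\<^sub>m (r J) (r 1)" using Invq'[OF I, of 1 J] J2 by simp
          then show ?thesis unfolding XPj[OF Xc j3] e using qorth[of J] XW aJ' W q1c qJ J2 by simp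
        qed
      qed
      show ?thesis by (rule key[OF Xc proj_zero[OF Xc Pc[OF j1] qtc[OF j1] XP]])
    next
      case False
      then have a2: "2 \<le> a" and aJ2: "a < J" using a1 aJ by auto
      have j3: "3 \<le> j" and J3: "3 \<le> J" using a2 aJ2 j_def by auto
      have e: "j - 1 = J" "j - 2 = J - 1" using j_def by auto
      have qJ: "q J \<in> carrier_mat n (r J)" using qdim J3 by simp
      have qJ1: "q (J - 1) \<in> carrier_mat n (r (J - 1))" using qdim J3 by simp
      have cqe: "cq J = r (J - 1)" using J3 unfolding cq_def by auto
      have bJ: "beta J \<in> carrier_mat (r J) (r (J - 1))" using betac[of J] J3 cqe by auto
      have X1: "(q a)\<^sup>T * q 1 = 0\<^sub>m (r a) (r 1)" using Invq'[OF I, of 1 a] a2 aJ2 by simp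
      have XJ: "(q a)\<^sup>T * q J = 0\<^sub>m (r a) (r J)" using Invq[OF I, of a J] a2 aJ2 by simp
      have XP: "(q a)\<^sup>T * P j = 0\<^sub>m (r a) n"
        unfolding XPj[OF Xc j3] e using XW X1 XJ W q1c qJ by simp
      have "(q a)\<^sup>T * ((1\<^sub>m n - P j) * qt j) = (q a)\<^sup>T * qt j"
        by (rule proj_id[OF Xc Pc[OF j1] qtc[OF j1] XP])
      also have "\<dots> = (q a)\<^sup>T * (A * q J) - (q a)\<^sup>T * (q (J - 1) * (beta J)\<^sup>T)"
        unfolding qtj[OF j3] e using Xc A qJ qJ1 bJ by (intro mult_minus_right) auto
      also have "(q a)\<^sup>T * (q (J - 1) * (beta J)\<^sup>T) = ((q a)\<^sup>T * q (J - 1)) * (beta J)\<^sup>T"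
        using Xc qJ1 bJ by (intro assoc_mult_mat[symmetric]) auto
      also have "(q a)\<^sup>T * (A * q J) = ((q J)\<^sup>T * (A * q a))\<^sup>T"
        by (rule symA[OF A Xc qJ])
      finally have eq: "(q a)\<^sup>T * ((1\<^sub>m n - P j) * qt j) =
          ((q J)\<^sup>T * (A * q a))\<^sup>T - ((q a)\<^sup>T * q (J - 1)) * (beta J)\<^sup>T" .
      have "(q a)\<^sup>T * ((1\<^sub>m n - P j) * qt j) = 0\<^sub>m (r a) (r J)"
      proof (cases "a = J - 1")
        case True
        have "(q J)\<^sup>T * (A * q a) = (q J)\<^sup>T * A * q (J - 1)"
          unfolding True using qJ A qJ1 by (intro assoc_mult_mat[symmetric]) auto
        also have "\<dots> = beta J" using betaform[OF J3 I] by simp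
        finally have b: "(q J)\<^sup>T * (A * q a) = beta J" .
        have o: "(q a)\<^sup>T * q (J - 1) = 1\<^sub>m (r a)" using qorth[OF a1] True by simp
        show ?thesis unfolding eq b o using bJ True by simp
      next
        case False
        have b: "(q J)\<^sup>T * (A * q a) = 0\<^sub>m (r J) (r a)"
          using Aq_ortho[OF I a2] False aJ2 by simp
        have o: "(q a)\<^sup>T * q (J - 1) = 0\<^sub>m (r a) (r (J - 1))"
          using Invq[OF I, of a "J - 1"] False aJ2 a2 by simp
        show ?thesis unfolding eq b o using bJ by simp
      qed
      moreover have "cq j = r J" using j_def J3 unfolding cq_def by simp
      ultimately show ?thesis using key[OF Xc] by simp
    qed
  qed
  show ?thesis unfolding Inv_def
  proof (intro conjI allI impI)
    fix b assume "1 \<le> b" "b \<le> Suc J"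
    then show "W\<^sup>T * q b = 0\<^sub>m m (r b)" using InvW[OF I] Wq j_def by (cases "b = Suc J") auto
  next
    fix a b assume "1 \<le> a" "a < b" "b \<le> Suc J"
    then show "(q a)\<^sup>T * q b = 0\<^sub>m (r a) (r b)" using Invq[OF I] qq j_def by (cases "b = Suc J") auto
  qed
qed

lemma Inv_all: "Inv J"
proof (induction J)
  case 0
  show ?case unfolding Inv_def by auto
next
  case (Suc J)
  show ?case by (rule Inv_step[OF Suc.IH])
qed

lemma main_result:
  shows "(\<forall>j \<ge> 1. orthonormal_list (cols W @ concat (map (\<lambda>i. cols (q i)) [1..<j+1])))
       \<and> (\<forall>j \<ge> 3. beta j = (q j)\<^sup>T * A * q (j - 1))"
proof (intro conjI allI impI)
  fix j :: nat assume "3 \<le> j" then show "beta j = (q j)\<^sup>T * A * q (j - 1)"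
    using betaform Inv_all by blast
next
  have "orthonormal_list (cols W @ concat (map (\<lambda>i. cols (q i)) [1..<j+1]))" for j
  proof (induction j)
    case 0
    then show ?case using orth_cols[OF W] by simp
  next
    case (Suc j)
    have split: "cols W @ concat (map (\<lambda>i. cols (q i)) [1..<Suc j + 1])
      = (cols W @ concat (map (\<lambda>i. cols (q i)) [1..<j+1])) @ cols (q (Suc j))" by simp
    show ?case unfolding split
    proof (rule orth_append[OF Suc.IH orth_cols[OF qdim qorth]])
      fix x y assume x: "x \<in> set (cols W @ concat (map (\<lambda>i. cols (q i)) [1..<j + 1]))"
        and y: "y \<in> set (cols (q (Suc j)))"
      have qS: "q (Suc j) \<in> carrier_mat n (r (Suc j))" using qdim by simp
      from x consider "x \<in> set (cols W)" | i where "1 \<le> i" "i \<le> j" "x \<in> set (cols (q i))" by auto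
      then show "x \<bullet> y = 0 \<and> y \<bullet> x = 0"
      proof cases
        case 1
        show ?thesis by (rule cols_prod_zero[OF W(1) qS InvW[OF Inv_all, of "Suc j"] 1 y]) auto
      next
        case 2
        show ?thesis by (rule cols_prod_zero[OF qdim[OF 2(1)] qS Invq[OF Inv_all 2(1)] 2(3) y]) (use 2 in auto)
      qed
    qed auto
  qed
  then show "\<And>j. 1 \<le> j \<Longrightarrow> orthonormal_list (cols W @ concat (map (\<lambda>i. cols (q i)) [1..<j+1]))" by blast
qed

end

theorem theorem3:
  fixes n m p :: nat
    and A W vkm1 vk alphak betak :: "real mat"
    and q qt beta P :: "nat \<Rightarrow> real mat"
    and r :: "nat \<Rightarrow> nat"
  assumes A: "A \<in> carrier_mat n n" "A\<^sup>T = A"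
    and W: "W \<in> carrier_mat n m" "W\<^sup>T * W = 1\<^sub>m m"
    and v: "vkm1 \<in> carrier_mat n p" "vk \<in> carrier_mat n p"
    and ab: "alphak \<in> carrier_mat p p" "betak \<in> carrier_mat p p"
    and qt1: "qt 1 = A * vk - vk * alphak - vkm1 * betak\<^sup>T"
    and qt2: "qt 2 = A * q 1 - vk * (beta 1)\<^sup>T"
    and qtj: "\<And>j. j \<ge> 3 \<Longrightarrow> qt j = A * q (j - 1) - q (j - 2) * (beta (j - 1))\<^sup>T"
    and P1: "P 1 = W * W\<^sup>T"
    and P2: "P 2 = P 1 + q 1 * (q 1)\<^sup>T"
    and Pj: "\<And>j. j \<ge> 3 \<Longrightarrow> P j = P 2 + q (j - 1) * (q (j - 1))\<^sup>T"
    and qdim: "\<And>j. j \<ge> 1 \<Longrightarrow> q j \<in> carrier_mat n (r j)"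
    and beta1dim: "beta 1 \<in> carrier_mat (r 1) p"
    and betajdim: "\<And>j. j \<ge> 2 \<Longrightarrow> beta j \<in> carrier_mat (r j) (r (j - 1))"
    and qorth: "\<And>j. j \<ge> 1 \<Longrightarrow> (q j)\<^sup>T * q j = 1\<^sub>m (r j)"
    and qspan: "\<And>j. j \<ge> 1 \<Longrightarrow> col_space (q j) = col_space ((1\<^sub>m n - P j) * qt j)"
    and qbeta: "\<And>j. j \<ge> 1 \<Longrightarrow> q j * beta j = (1\<^sub>m n - P j) * qt j"
    and betarank: "\<And>j. j \<ge> 1 \<Longrightarrow> full_row_rank (beta j)"
  shows "(\<forall>j \<ge> 1. orthonormal_list (cols W @ concat (map (\<lambda>i. cols (q i)) [1..<j+1])))
       \<and> (\<forall>j \<ge> 3. beta j = (q j)\<^sup>T * A * q (j - 1))"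
proof -
  interpret L: lanczos n m p A W vkm1 vk alphak betak q qt beta P r
    by unfold_locales (use assms in auto)
  show ?thesis by (rule L.main_result)
qed

end
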